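(* Let $\pi$ be an $R[G_n]$-module and $1\le k\le n$. Then $(\pi^{(k,\psi_R)})^\vee\cong(\pi^\vee)^{(k,\psi_R^{-1})}$.
   Context: Let $p$ be a prime, $q$ a power of $p$, $G_n=\mathrm{GL}_n(\mathbb{F}_q)$, $R$ a commutative Noetherian $\mathbb{Z}[\frac1p,\zeta_p]$-algebra, $\psi:(\mathbb{F}_q,+)\to\mathbb{Z}[\frac1p,\zeta_p]^\times$ nontrivial, $\psi_R$ its image in $R^\times$. $(-)^\vee$ is the $R$-linear dual with contragredient action. For a character $\chi\in\{\psi_R,\psi_R^{-1}\}$: $P_n$ is the mirabolic subgroup (last row $(0,\dots,0,1)$), $U_n=\{\begin{psmallmatrix}I_{n-1}&y\\0&1\end{psmallmatrix}\}$ with character $\chi(y_{n-1})$; for an $R[P_n]$-module $V$, $\Phi^-_\chi(V)=V/\langle uv-\chi(u)v:u\in U_n\rangle$ (an $R[P_{n-1}]$-module) and $\Psi^-(V)=V/\langle uv-v:u\in U_n\rangle$ (an $R[G_{n-1}]$-module); $\pi^{(k,\chi)}=\Psi^-(\Phi^-_\chi)^{k-1}(\pi|_{P_n})$, an $R[G_{n-k}]$-module. *)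

theory Defs
  imports Complex_Main "HOL-Library.Function_Algebras" "Jordan_Normal_Form.Matrix"
begin

definition is_ideal :: "'r::comm_ring_1 set \<Rightarrow> bool" where
  "is_ideal I \<longleftrightarrow> 0 \<in> I \<and> (\<forall>x\<in>I. \<forall>y\<in>I. x + y \<in> I) \<and> (\<forall>r. \<forall>x\<in>I. r * x \<in> I)"

definition noetherian_ring :: "'r::comm_ring_1 itself \<Rightarrow> bool" where
  "noetherian_ring _ \<longleftrightarrow>
     (\<forall>I::'r set. is_ideal I \<longrightarrow>
        (\<exists>F. finite F \<and> F \<subseteq> I \<and> I = {\<Sum>x\<in>F. c x * x | c. True}))"

text \<open>The ring Z[1/p, zeta_p], realised as the subring of the complex numbers
  generated by 1/p and zeta_p = exp(2 pi i / p).\<close>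
inductive_set Zpz :: "nat \<Rightarrow> complex set" for p :: nat where
  one: "1 \<in> Zpz p"
| zeta: "cis (2 * pi / real p) \<in> Zpz p"
| invp: "1 / of_nat p \<in> Zpz p"
| neg: "x \<in> Zpz p \<Longrightarrow> - x \<in> Zpz p"
| add: "x \<in> Zpz p \<Longrightarrow> y \<in> Zpz p \<Longrightarrow> x + y \<in> Zpz p"
| mult: "x \<in> Zpz p \<Longrightarrow> y \<in> Zpz p \<Longrightarrow> x * y \<in> Zpz p"

text \<open>A ring homomorphism Z[1/p,zeta_p] -> R (the algebra structure map).\<close>
definition Zpz_alg_hom :: "nat \<Rightarrow> (complex \<Rightarrow> 'r::comm_ring_1) \<Rightarrow> bool" where
  "Zpz_alg_hom p \<phi> \<longleftrightarrow> \<phi> 1 = 1 \<and>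
     (\<forall>x\<in>Zpz p. \<forall>y\<in>Zpz p. \<phi> (x + y) = \<phi> x + \<phi> y \<and> \<phi> (x * y) = \<phi> x * \<phi> y)"

definition nontriv_add_char :: "nat \<Rightarrow> ('f::{field,finite} \<Rightarrow> complex) \<Rightarrow> bool" where
  "nontriv_add_char p \<psi> \<longleftrightarrow>
     (\<forall>x. \<psi> x \<in> Zpz p \<and> (\<exists>y\<in>Zpz p. \<psi> x * y = 1)) \<and>
     (\<forall>x y. \<psi> (x + y) = \<psi> x * \<psi> y) \<and> (\<exists>x. \<psi> x \<noteq> 1)"

definition GL :: "nat \<Rightarrow> 'f::field mat set" where
  "GL n = {A \<in> carrier_mat n n. invertible_mat A}"

definition ginv :: "nat \<Rightarrow> 'f::field mat \<Rightarrow> 'f mat" where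
  "ginv n g = (SOME h. h \<in> carrier_mat n n \<and> h * g = 1\<^sub>m n)"

definition emb :: "nat \<Rightarrow> 'f::field mat \<Rightarrow> 'f mat" where
  "emb n g = mat n n (\<lambda>(i,j). if i < dim_row g \<and> j < dim_row g then g $$ (i,j)
                               else if i = j then 1 else 0)"

text \<open>U_m (inside P_m inside G_m inside G_n): identity matrices except for the
  entries of column m-1 (0-indexed) above the diagonal.\<close>
definition Umat :: "nat \<Rightarrow> nat \<Rightarrow> 'f::field mat set" where
  "Umat n m = {u \<in> carrier_mat n n. \<forall>i<n. \<forall>j<n.
       (i = j \<longrightarrow> u $$ (i,j) = 1) \<and>
       (i \<noteq> j \<and> \<not> (j = m - 1 \<and> i < m - 1) \<longrightarrow> u $$ (i,j) = 0)}"

definition is_rep :: "nat \<Rightarrow> ('r::comm_ring_1 \<Rightarrow> 'v::ab_group_add \<Rightarrow> 'v)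
                     \<Rightarrow> ('f::field mat \<Rightarrow> 'v \<Rightarrow> 'v) \<Rightarrow> bool" where
  "is_rep n s act \<longleftrightarrow> Modules.module s \<and>
     (\<forall>g\<in>GL n. \<forall>x y. act g (x + y) = act g x + act g y) \<and>
     (\<forall>g\<in>GL n. \<forall>c x. act g (s c x) = s c (act g x)) \<and>
     (\<forall>x. act (1\<^sub>m n) x = x) \<and>
     (\<forall>g\<in>GL n. \<forall>h\<in>GL n. \<forall>x. act (g * h) x = act g (act h x))"

text \<open>Relations for Phi^-_chi at level m (module presented with carrier V inside an
  ambient module s, the G_n-action act restricted to U_m).\<close>
definition rels :: "('r::comm_ring_1 \<Rightarrow> 'a::ab_group_add \<Rightarrow> 'a) \<Rightarrow> ('f::field mat \<Rightarrow> 'a \<Rightarrow> 'a)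
                   \<Rightarrow> 'a set \<Rightarrow> nat \<Rightarrow> nat \<Rightarrow> ('f \<Rightarrow> 'r) \<Rightarrow> 'a set" where
  "rels s act V n m \<chi> =
     {act u v - s (\<chi> (u $$ (m - 2, m - 1))) v | u v. u \<in> Umat n m \<and> v \<in> V}"

text \<open>Relations for Psi^- at level m (trivial character).\<close>
definition relsT :: "('f::field mat \<Rightarrow> 'a::ab_group_add \<Rightarrow> 'a) \<Rightarrow> 'a set \<Rightarrow> nat \<Rightarrow> nat \<Rightarrow> 'a set" where
  "relsT act V n m = {act u v - v | u v. u \<in> Umat n m \<and> v \<in> V}"

text \<open>Kernel of V -> (Phi^-_chi)^j (V|_{P_n}); a quotient of a quotient is a quotient.\<close>
fun phiW :: "('r::comm_ring_1 \<Rightarrow> 'a::ab_group_add \<Rightarrow> 'a) \<Rightarrow> ('f::field mat \<Rightarrow> 'a \<Rightarrow> 'a)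
              \<Rightarrow> 'a set \<Rightarrow> nat \<Rightarrow> ('f \<Rightarrow> 'r) \<Rightarrow> nat \<Rightarrow> 'a set" where
  "phiW s act V n \<chi> 0 = Modules.module.span s {}"
| "phiW s act V n \<chi> (Suc j) = Modules.module.span s (phiW s act V n \<chi> j \<union> rels s act V n (n - j) \<chi>)"

text \<open>Kernel of V -> V^{(k,chi)} = Psi^- (Phi^-_chi)^{k-1} (V|_{P_n}).
  The derivative is V / derivW, with G_{n-k} acting through emb n.\<close>
definition derivW :: "('r::comm_ring_1 \<Rightarrow> 'a::ab_group_add \<Rightarrow> 'a) \<Rightarrow> ('f::field mat \<Rightarrow> 'a \<Rightarrow> 'a)
              \<Rightarrow> 'a set \<Rightarrow> nat \<Rightarrow> nat \<Rightarrow> ('f \<Rightarrow> 'r) \<Rightarrow> 'a set" where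
  "derivW s act V n k \<chi> =
     Modules.module.span s (phiW s act V n \<chi> (k - 1) \<union> relsT act V n (n - k + 1))"

text \<open>Isomorphism of G-modules V1/W1 and V2/W2 (presented as quotients), given by a
  lift f : V1 -> V2 of the isomorphism.\<close>
definition quot_iso :: "('r \<Rightarrow> 'a::ab_group_add \<Rightarrow> 'a) \<Rightarrow> ('g \<Rightarrow> 'a \<Rightarrow> 'a) \<Rightarrow> 'a set \<Rightarrow> 'a set
                      \<Rightarrow> ('r \<Rightarrow> 'b::ab_group_add \<Rightarrow> 'b) \<Rightarrow> ('g \<Rightarrow> 'b \<Rightarrow> 'b) \<Rightarrow> 'b set \<Rightarrow> 'b set
                      \<Rightarrow> 'g set \<Rightarrow> bool" where
  "quot_iso s1 act1 V1 W1 s2 act2 V2 W2 G \<longleftrightarrow>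
    (\<exists>f. (\<forall>x\<in>V1. f x \<in> V2) \<and>
         (\<forall>x\<in>V1. \<forall>y\<in>V1. f (x + y) - (f x + f y) \<in> W2) \<and>
         (\<forall>c. \<forall>x\<in>V1. f (s1 c x) - s2 c (f x) \<in> W2) \<and>
         (\<forall>x\<in>V1. x \<in> W1 \<longleftrightarrow> f x \<in> W2) \<and>
         (\<forall>y\<in>V2. \<exists>x\<in>V1. y - f x \<in> W2) \<and>
         (\<forall>g\<in>G. \<forall>x\<in>V1. f (act1 g x) - act2 g (f x) \<in> W2))"

definition dscale :: "'r::comm_ring_1 \<Rightarrow> ('v \<Rightarrow> 'r) \<Rightarrow> ('v \<Rightarrow> 'r)" where
  "dscale c f = (\<lambda>v. c * f v)"

definition dual_space :: "('r::comm_ring_1 \<Rightarrow> 'v::ab_group_add \<Rightarrow> 'v) \<Rightarrow> ('v \<Rightarrow> 'r) set" where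
  "dual_space s = {f. Modules.module_hom s ((*)) f}"

definition dual_act :: "nat \<Rightarrow> ('f::field mat \<Rightarrow> 'v \<Rightarrow> 'v) \<Rightarrow> 'f mat \<Rightarrow> ('v \<Rightarrow> 'r) \<Rightarrow> ('v \<Rightarrow> 'r)" where
  "dual_act n act g f = (\<lambda>v. f (act (ginv n g) v))"

text \<open>Dual of the derivative pi^{(k,chi)} = V / derivW: functionals vanishing on derivW,
  with the contragredient action of G_{n-k}.\<close>
definition deriv_dual_space :: "('r::comm_ring_1 \<Rightarrow> 'v::ab_group_add \<Rightarrow> 'v) \<Rightarrow> ('f::field mat \<Rightarrow> 'v \<Rightarrow> 'v)
      \<Rightarrow> nat \<Rightarrow> nat \<Rightarrow> ('f \<Rightarrow> 'r) \<Rightarrow> ('v \<Rightarrow> 'r) set" where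
  "deriv_dual_space s act n k \<chi> =
     {f \<in> dual_space s. \<forall>w\<in>derivW s act UNIV n k \<chi>. f w = 0}"

definition deriv_dual_act :: "nat \<Rightarrow> nat \<Rightarrow> ('f::field mat \<Rightarrow> 'v \<Rightarrow> 'v) \<Rightarrow> 'f mat \<Rightarrow> ('v \<Rightarrow> 'r) \<Rightarrow> ('v \<Rightarrow> 'r)" where
  "deriv_dual_act n k act g f = (\<lambda>v. f (act (emb n (ginv (n - k) g)) v))"

end

theory Submission
  imports Defs "HOL-Algebra.Sylow" "HOL-Algebra.Multiplicative_Group" "HOL-Library.FuncSet"
begin


definition addgrp :: "'f::field set \<Rightarrow> 'f monoid" where
  "addgrp S = \<lparr>carrier = S, monoid.mult = (+), one = 0\<rparr>"

lemma addgrp_pow: "x [^]\<^bsub>addgrp S\<^esub> (n::nat) = of_nat n * x"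
  by (induct n) (auto simp: addgrp_def algebra_simps)

lemma addgrp_simps[simp]: "\<one>\<^bsub>addgrp S\<^esub> = 0" "carrier (addgrp S) = S"
  by (auto simp: addgrp_def)

lemma addgrp_group: "group (addgrp (UNIV::'f::field set))"
  apply (rule groupI)
  apply (auto simp: addgrp_def algebra_simps)
  by (metis add.commute add.right_inverse)

lemma card_field_prime_factor:
  fixes r :: nat
  assumes pc: "prime CHAR('f)" and r: "prime r" "r dvd card (UNIV::'f set)"
  shows "r = CHAR('f::{field,finite})"
proof (rule ccontr)
  assume ne: "r \<noteq> CHAR('f)"
  interpret G: group "addgrp (UNIV::'f set)" by (rule addgrp_group)
  obtain m where m: "card (UNIV::'f set) = r * m" using r by blast
  have syl: "sylow (addgrp (UNIV::'f set)) r 1 m"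
    unfolding sylow_eq sylow_axioms_def using r m G.group_axioms by (auto simp: addgrp_def order_def)
  obtain H where H: "subgroup H (addgrp (UNIV::'f set))" "card H = r"
    using sylow.sylow_thm[OF syl] by auto
  have gH: "group (addgrp H)"
    using G.subgroup_imp_group[OF H(1)] by (simp add: addgrp_def)
  have "H \<subseteq> {0}"
  proof
    fix x assume x: "x \<in> H"
    have "x [^]\<^bsub>addgrp H\<^esub> order (addgrp H) = \<one>\<^bsub>addgrp H\<^esub>"
      using group.pow_order_eq_1[OF gH] x by simp
    then have "of_nat r * x = 0" using H by (simp add: addgrp_pow order_def)
    moreover have "(of_nat r :: 'f) \<noteq> 0"
    proof
      assume "(of_nat r :: 'f) = 0"
      then have "CHAR('f) dvd r" by (simp add: of_nat_eq_0_iff_char_dvd)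
      then have "CHAR('f) = 1 \<or> CHAR('f) = r" using r(1) prime_nat_iff by blast
      then show False using pc ne by auto
    qed
    ultimately show "x \<in> {0}" by simp
  qed
  then have "card H \<le> card {0::'f}" by (intro card_mono) auto
  then show False using H r(1) prime_gt_1_nat[of r] by simp
qed

lemma all_factors_power:
  fixes n p :: nat
  assumes "n > 0" "\<And>r. prime r \<Longrightarrow> r dvd n \<Longrightarrow> r = p"
  shows "\<exists>d. n = p ^ d"
  using assms
proof (induction n rule: less_induct)
  case (less n)
  show ?case
  proof (cases "n = 1")
    case True then show ?thesis by (intro exI[of _ 0]) simp
  next
    case False
    then obtain r where r: "prime r" "r dvd n" using less.prems(1) prime_factor_nat by blast
    then have rp: "r = p" using less.prems by blast
    obtain n' where n': "n = r * n'" using r by blast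
    have "n' > 0" using less.prems(1) n' by auto
    moreover have "n' < n" using n' r(1) \<open>n' > 0\<close> prime_gt_1_nat[of r] by simp
    moreover have "\<And>r'. prime r' \<Longrightarrow> r' dvd n' \<Longrightarrow> r' = p" using less.prems(2) n' by auto
    ultimately obtain d where "n' = p ^ d" using less.IH by blast
    then show ?thesis using n' rp by (intro exI[of _ "Suc d"]) simp
  qed
qed

lemma card_field_power:
  assumes "prime CHAR('f::{field,finite})"
  shows "\<exists>d. card (UNIV :: 'f set) = CHAR('f) ^ d"
  by (rule all_factors_power) (use card_field_prime_factor[OF assms] in \<open>auto simp: finite_UNIV_card_ge_0\<close>)



definition colm :: "nat \<Rightarrow> nat \<Rightarrow> (nat \<Rightarrow> 'f::field) \<Rightarrow> 'f mat" where
  "colm n c a = mat n n (\<lambda>(i,j). if j = c then a i else 0)"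

lemma colm_carrier[simp]: "colm n c a \<in> carrier_mat n n"
  by (simp add: colm_def)

lemma colm_index[simp]: "i < n \<Longrightarrow> j < n \<Longrightarrow> colm n c a $$ (i,j) = (if j = c then a i else 0)"
  "dim_row (colm n c a) = n" "dim_col (colm n c a) = n"
  by (auto simp: colm_def)

lemma colm_mult: assumes "c < n"
  shows "colm n c a * colm n c' b = colm n c' (\<lambda>i. a i * b c)"
proof (rule eq_matI)
  fix i j assume ij: "i < dim_row (colm n c' (\<lambda>i. a i * b c))" "j < dim_col (colm n c' (\<lambda>i. a i * b c))"
  then have "(colm n c a * colm n c' b) $$ (i,j) = (\<Sum>l\<in>{0..<n}. (if l = c then a i else 0) * (if j = c' then b l else 0))"
    by (simp add: scalar_prod_def)
  also have "\<dots> = (\<Sum>l\<in>{0..<n}. if l = c then a i * (if j = c' then b c else 0) else 0)"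
    by (rule sum.cong) auto
  also have "\<dots> = (if j = c' then a i * b c else 0)" using assms by simp
  finally show "(colm n c a * colm n c' b) $$ (i,j) = colm n c' (\<lambda>i. a i * b c) $$ (i,j)"
    using ij by simp
qed auto

lemma colm_add: "colm n c a + colm n c b = colm n c (\<lambda>i. a i + b i)"
  by (rule eq_matI) auto

lemma colm_zero: "colm n c (\<lambda>i. 0) = 0\<^sub>m n n"
  by (rule eq_matI) auto

lemma one_plus_mult:
  fixes X Y :: "'a::comm_ring_1 mat"
  assumes "X \<in> carrier_mat n n" "Y \<in> carrier_mat n n"
  shows "(1\<^sub>m n + X) * (1\<^sub>m n + Y) = 1\<^sub>m n + X + Y + X * Y"
proof -
  have "(1\<^sub>m n + X) * (1\<^sub>m n + Y) = (1\<^sub>m n + X) * 1\<^sub>m n + (1\<^sub>m n + X) * Y"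
    using assms by (intro mult_add_distrib_mat) auto
  also have "(1\<^sub>m n + X) * Y = 1\<^sub>m n * Y + X * Y"
    using assms by (intro add_mult_distrib_mat) auto
  also have "(1\<^sub>m n + X) * 1\<^sub>m n = 1\<^sub>m n + X" using assms by simp
  also have "1\<^sub>m n * Y = Y" using assms by (intro left_mult_one_mat) auto
  finally have e: "(1\<^sub>m n + X) * (1\<^sub>m n + Y) = 1\<^sub>m n + X + (Y + X * Y)" .
  show ?thesis unfolding e using assms by (intro eq_matI) (auto simp: ac_simps)
qed

definition Uel :: "nat \<Rightarrow> nat \<Rightarrow> (nat \<Rightarrow> 'f::field) \<Rightarrow> 'f mat" where
  "Uel n m a = 1\<^sub>m n + colm n (m - 1) (\<lambda>i. if i < m - 1 then a i else 0)"

lemma Uel_carrier[simp]: "Uel n m a \<in> carrier_mat n n"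
  by (simp add: Uel_def)

lemma Uel_index: "i < n \<Longrightarrow> j < n \<Longrightarrow> Uel n m a $$ (i,j) =
   (if i = j then 1 else if j = m - 1 \<and> i < m - 1 then a i else 0)"
  by (auto simp: Uel_def)

lemma Uel_dim[simp]: "dim_row (Uel n m a) = n" "dim_col (Uel n m a) = n"
  by (auto simp: Uel_def)

lemma Uel_cong: "(\<And>i. i < m - 1 \<Longrightarrow> a i = b i) \<Longrightarrow> Uel n m a = Uel n m b"
  unfolding Uel_def by (rule arg_cong[where f="\<lambda>x. 1\<^sub>m n + colm n (m - 1) x"]) auto

lemma Uel_mult: assumes "1 \<le> m" "m \<le> n"
  shows "Uel n m a * Uel n m b = Uel n m (\<lambda>i. a i + b i)"
proof -
  have "Uel n m a * Uel n m b = 1\<^sub>m n + colm n (m - 1) (\<lambda>i. if i < m - 1 then a i else 0)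
     + colm n (m - 1) (\<lambda>i. if i < m - 1 then b i else 0)
     + colm n (m - 1) (\<lambda>i. if i < m - 1 then a i else 0) * colm n (m - 1) (\<lambda>i. if i < m - 1 then b i else 0)"
    unfolding Uel_def by (rule one_plus_mult) auto
  also have "colm n (m - 1) (\<lambda>i. if i < m - 1 then a i else 0) * colm n (m - 1) (\<lambda>i. if i < m - 1 then b i else 0)
     = 0\<^sub>m n n" using assms by (simp add: colm_mult colm_zero)
  finally show ?thesis unfolding Uel_def
    by (intro eq_matI) auto
qed

lemma Uel_zero: "Uel n m (\<lambda>i. 0) = 1\<^sub>m n"
  by (simp add: Uel_def colm_zero)

lemma Uel_inv: assumes "1 \<le> m" "m \<le> n"
  shows "Uel n m a * Uel n m (\<lambda>i. - a i) = 1\<^sub>m n"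
  using Uel_mult[OF assms, of a "\<lambda>i. - a i"] by (simp add: Uel_zero)

lemma Uel_conj: assumes "1 \<le> m'" "m' < m" "m \<le> n"
  shows "Uel n m' c * Uel n m a =
     Uel n m (\<lambda>i. a i + (if i < m' - 1 then c i * a (m' - 1) else 0)) * Uel n m' c"
proof -
  define C where "C = colm n (m' - 1) (\<lambda>i. if i < m' - 1 then c i else 0)"
  define A where "A = colm n (m - 1) (\<lambda>i. if i < m - 1 then a i else 0)"
  define A2 where "A2 = colm n (m - 1) (\<lambda>i. if i < m - 1 then a i + (if i < m' - 1 then c i * a (m' - 1) else 0) else 0)"
  have CA: "C * A = colm n (m - 1) (\<lambda>i. (if i < m' - 1 then c i else 0) * a (m' - 1))"
    unfolding C_def A_def using assms by (simp add: colm_mult)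
  have A2C: "A2 * C = 0\<^sub>m n n"
    unfolding C_def A2_def using assms by (simp add: colm_mult colm_zero)
  have "Uel n m' c * Uel n m a = 1\<^sub>m n + C + A + C * A"
    unfolding Uel_def C_def[symmetric] A_def[symmetric] by (rule one_plus_mult) (auto simp: A_def C_def)
  also have "\<dots> = 1\<^sub>m n + A2 + C + A2 * C"
    unfolding A2C CA using assms by (intro eq_matI) (auto simp: A_def A2_def C_def)
  also have "\<dots> = Uel n m (\<lambda>i. a i + (if i < m' - 1 then c i * a (m' - 1) else 0)) * Uel n m' c"
    unfolding Uel_def C_def[symmetric] A2_def[symmetric] by (rule one_plus_mult[symmetric]) (auto simp: A2_def C_def)
  finally show ?thesis .
qed

lemma Uel_Umat: "Uel n m a \<in> Umat n m"
  by (auto simp: Umat_def Uel_index)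

lemma Umat_Uel: assumes "u \<in> Umat n m" shows "u = Uel n m (\<lambda>i. u $$ (i, m - 1))"
  using assms by (intro eq_matI) (auto simp: Umat_def Uel_index)

lemma Uel_entry: "2 \<le> m \<Longrightarrow> m \<le> n \<Longrightarrow> Uel n m a $$ (m - 2, m - Suc 0) = a (m - 2)"
  by (simp add: Uel_index)

lemma ginv_eq: fixes g h :: "'f::field mat"
  assumes "g \<in> carrier_mat n n" "h \<in> carrier_mat n n" "h * g = 1\<^sub>m n" "g * h = 1\<^sub>m n"
  shows "ginv n g = h"
  unfolding ginv_def
proof (rule some_equality)
  fix h' assume h': "h' \<in> carrier_mat n n \<and> h' * g = 1\<^sub>m n"
  have "h' = h' * (g * h)" using assms h' right_mult_one_mat[of h' n n] by simp
  also have "\<dots> = (h' * g) * h" using assms h' by (metis assoc_mult_mat)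
  also have "\<dots> = 1\<^sub>m n * h" using h' by (simp only:)
  also have "\<dots> = h" using assms left_mult_one_mat[of h n n] by simp
  finally show "h' = h" .
qed (use assms in auto)

lemma ginv_Uel: assumes "1 \<le> m" "m \<le> n"
  shows "ginv n (Uel n m a) = Uel n m (\<lambda>i. - a i)"
  using Uel_inv[OF assms, of a] Uel_inv[OF assms, of "\<lambda>i. - a i"]
  by (intro ginv_eq) auto

lemma Uel_GL: assumes "1 \<le> m" "m \<le> n" shows "Uel n m a \<in> GL n"
  using Uel_inv[OF assms, of a] Uel_inv[OF assms, of "\<lambda>i. - a i"]
  unfolding GL_def invertible_mat_def inverts_mat_def square_mat.simps
  by (intro CollectI conjI exI[of _ "Uel n m (\<lambda>i. - a i)"]) auto

lemma emb_four: assumes "g \<in> carrier_mat d d" "n = d + k"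
  shows "emb n g = four_block_mat g (0\<^sub>m d k) (0\<^sub>m k d) (1\<^sub>m k)"
  using assms by (intro eq_matI) (auto simp: emb_def)

lemma emb_mult: assumes "g \<in> carrier_mat d d" "h \<in> carrier_mat d d" "d \<le> n"
  shows "emb n h * emb n g = emb n (h * g)"
proof -
  obtain k where n: "n = d + k" using assms(3) le_Suc_ex by blast
  have hg: "h * g \<in> carrier_mat d d" using assms by simp
  show ?thesis unfolding emb_four[OF assms(1) n] emb_four[OF assms(2) n] emb_four[OF hg n]
    using assms by (subst mult_four_block_mat[OF assms(2) zero_carrier_mat zero_carrier_mat one_carrier_mat assms(1) zero_carrier_mat zero_carrier_mat one_carrier_mat]) auto
qed

lemma emb_one: "d \<le> n \<Longrightarrow> emb n (1\<^sub>m d :: 'f::field mat) = 1\<^sub>m n"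
  by (intro eq_matI) (auto simp: emb_def)

lemma emb_carrier: "emb n g \<in> carrier_mat n n"
  by (simp add: emb_def)

lemma GL_inv: assumes "g \<in> GL d"
  obtains h where "h \<in> carrier_mat d d" "h * g = 1\<^sub>m d" "g * h = 1\<^sub>m d" "ginv d g = h"
proof -
  from assms obtain B where g: "g \<in> carrier_mat d d" "g * B = 1\<^sub>m d" "B * g = 1\<^sub>m (dim_row B)"
    unfolding GL_def invertible_mat_def inverts_mat_def by auto
  have "dim_col B = d" using g(2) by (metis index_mult_mat(3) index_one_mat(3))
  moreover have "dim_row B = d" using g by (metis carrier_matD(2) index_mult_mat(3) index_one_mat(3))
  ultimately have B: "B \<in> carrier_mat d d" by auto
  show ?thesis using g B by (intro that[of B]) (auto intro: ginv_eq)
qed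

lemma ginv_emb: assumes "g \<in> GL d" "d \<le> n"
  shows "ginv n (emb n g) = emb n (ginv d g)"
proof -
  obtain h where h: "h \<in> carrier_mat d d" "h * g = 1\<^sub>m d" "g * h = 1\<^sub>m d" "ginv d g = h"
    using GL_inv[OF assms(1)] by blast
  have g: "g \<in> carrier_mat d d" using assms by (simp add: GL_def)
  show ?thesis unfolding h(4)
    by (rule ginv_eq) (use g h assms in \<open>auto simp: emb_carrier emb_mult emb_one\<close>)
qed



definition Pset :: "nat \<Rightarrow> (nat \<Rightarrow> 'f) set" where
  "Pset m = PiE {..<m - 1} (\<lambda>_. UNIV)"

lemma finite_Pset[simp]: "finite (Pset m :: (nat \<Rightarrow> 'f::finite) set)"
  unfolding Pset_def by (intro finite_PiE) auto

lemma card_Pset: "card (Pset m :: (nat \<Rightarrow> 'f::finite) set) = card (UNIV :: 'f set) ^ (m - 1)"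
  unfolding Pset_def by (simp add: card_PiE)

definition goodc :: "('f::field \<Rightarrow> 'r::comm_ring_1) \<Rightarrow> bool" where
  "goodc \<xi> \<longleftrightarrow> \<xi> 0 = 1 \<and> (\<forall>x y. \<xi> (x + y) = \<xi> x * \<xi> y)"

definition lv :: "nat \<Rightarrow> nat \<Rightarrow> ('f \<Rightarrow> 'r::comm_ring_1) \<Rightarrow> bool" where
  "lv n m \<xi> \<longleftrightarrow> 1 \<le> m \<and> m \<le> n \<and> (2 \<le> m \<or> (\<forall>x. \<xi> x = 1))"

lemma goodc_neg: "goodc \<xi> \<Longrightarrow> \<xi> (- x) * \<xi> x = 1"
  unfolding goodc_def by (metis add.left_inverse)

lemma shift_bij: "bij_betw (\<lambda>a. restrict (\<lambda>i. a i + b i) {..<r}) (PiE {..<r} (\<lambda>_. UNIV)) (PiE {..<r} (\<lambda>_. (UNIV :: 'g::ab_group_add set)))"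
  by (rule bij_betw_byWitness[where f'="\<lambda>a. restrict (\<lambda>i. a i - b i) {..<r}"])
     (auto simp: fun_eq_iff PiE_iff extensional_def)

lemma sum_fun_apply: "(sum f A) x = (\<Sum>a\<in>A. f a x)"
  by (induct A rule: infinite_finite_induct) auto

lemma module_dscale: "Modules.module (dscale :: 'r::comm_ring_1 \<Rightarrow> ('v \<Rightarrow> 'r) \<Rightarrow> ('v \<Rightarrow> 'r))"
  by unfold_locales (auto simp: dscale_def fun_eq_iff algebra_simps)

lemma dscale_apply[simp]: "dscale c f v = c * f v"
  by (simp add: dscale_def)

locale dctx =
  fixes s :: "'r::comm_ring_1 \<Rightarrow> 'v::ab_group_add \<Rightarrow> 'v"
    and act :: "'f::{field,finite} mat \<Rightarrow> 'v \<Rightarrow> 'v"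
    and n :: nat and ci :: 'r
  assumes rep: "is_rep n s act"
      and ci: "ci * of_nat (card (UNIV :: 'f set)) = 1"
begin

lemma modl: "Modules.module s" using rep by (simp add: is_rep_def)

sublocale M: Modules.module s by (rule modl)

lemma act_hom: "g \<in> GL n \<Longrightarrow> module_hom s s (act g)"
  using rep modl by (simp add: is_rep_def module_hom_iff)

lemma act_mult: "g \<in> GL n \<Longrightarrow> h \<in> GL n \<Longrightarrow> act g (act h v) = act (g * h) v"
  using rep by (simp add: is_rep_def)

lemma act_one: "act (1\<^sub>m n) v = v"
  using rep by (simp add: is_rep_def)

lemma act_UU: "lv n m \<xi> \<Longrightarrow> act (Uel n m a) (act (Uel n m b) v) = act (Uel n m (\<lambda>i. a i + b i)) v"
  by (simp add: act_mult Uel_GL lv_def Uel_mult)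

definition Eop :: "('f \<Rightarrow> 'r) \<Rightarrow> nat \<Rightarrow> 'v \<Rightarrow> 'v" where
  "Eop \<xi> m v = s (ci ^ (m - 1)) (\<Sum>a\<in>Pset m. s (\<xi> (- a (m - 2))) (act (Uel n m a) v))"

lemma Eop_hom: assumes "lv n m \<xi>" shows "module_hom s s (Eop \<xi> m)"
proof -
  interpret MP: Modules.module_pair s s by unfold_locales
  have "module_hom s s (\<lambda>v. \<Sum>a\<in>Pset m. s (\<xi> (- a (m - 2))) (act (Uel n m a) v))"
    using assms by (intro MP.module_hom_sum MP.module_hom_scale act_hom Uel_GL) (auto simp: lv_def modl)
  then show ?thesis unfolding Eop_def[abs_def] by (rule MP.module_hom_scale)
qed

lemma ci_pow: "ci ^ (m - Suc 0) * of_nat (card (Pset m :: (nat \<Rightarrow> 'f) set)) = 1"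
  by (simp add: card_Pset power_mult_distrib[symmetric] ci)

lemma Eop_right: assumes lvm: "lv n m \<xi>" and g: "goodc \<xi>"
  shows "Eop \<xi> m (act (Uel n m b) v) = s (\<xi> (b (m - 2))) (Eop \<xi> m v)"
proof -
  define \<tau> where "\<tau> = (\<lambda>a. restrict (\<lambda>i. a i + b i) {..<m - 1})"
  define h where "h = (\<lambda>a. s (\<xi> (- a (m - 2))) (act (Uel n m a) v))"
  have bij: "bij_betw \<tau> (Pset m) (Pset m)" unfolding \<tau>_def Pset_def by (rule shift_bij)
  have "(\<Sum>a\<in>Pset m. s (\<xi> (- a (m - 2))) (act (Uel n m a) (act (Uel n m b) v)))
      = (\<Sum>a\<in>Pset m. s (\<xi> (b (m - 2))) (h (\<tau> a)))"
  proof (rule sum.cong[OF refl])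
    fix a :: "nat \<Rightarrow> 'f" assume "a \<in> Pset m"
    have U: "Uel n m (\<lambda>i. a i + b i) = Uel n m (\<tau> a)" by (rule Uel_cong) (simp add: \<tau>_def)
    have c: "\<xi> (- a (m - 2)) = \<xi> (b (m - 2)) * \<xi> (- \<tau> a (m - 2))"
    proof (cases "2 \<le> m")
      case True
      then have "\<tau> a (m - 2) = a (m - 2) + b (m - 2)" by (simp add: \<tau>_def, arith)
      then have "- a (m - 2) = - \<tau> a (m - 2) + b (m - 2)" by simp
      then show ?thesis using g unfolding goodc_def by (metis add.commute mult.commute)
    next
      case False then show ?thesis using lvm by (simp add: lv_def)
    qed
    show "s (\<xi> (- a (m - 2))) (act (Uel n m a) (act (Uel n m b) v)) = s (\<xi> (b (m - 2))) (h (\<tau> a))"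
      unfolding h_def using lvm by (simp add: act_UU U c)
  qed
  also have "\<dots> = s (\<xi> (b (m - 2))) (\<Sum>a\<in>Pset m. h (\<tau> a))" by (simp add: M.scale_sum_right)
  also have "(\<Sum>a\<in>Pset m. h (\<tau> a)) = (\<Sum>a\<in>Pset m. h a)" by (rule sum.reindex_bij_betw[OF bij])
  finally show ?thesis unfolding Eop_def h_def by (simp add: mult.commute)
qed

lemma Eop_left: assumes lvm: "lv n m \<xi>"
  shows "act (Uel n m b) (Eop \<xi> m v) = Eop \<xi> m (act (Uel n m b) v)"
proof -
  interpret H: module_hom s s "act (Uel n m b)" using lvm by (intro act_hom Uel_GL) (auto simp: lv_def)
  show ?thesis unfolding Eop_def using lvm
    by (simp add: H.scale H.sum act_UU add.commute)
qed

lemma chi_entry: assumes lvm: "lv n m \<xi>" and g: "goodc \<xi>"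
  shows "\<xi> (- a (m - 2)) * \<xi> (Uel n m a $$ (m - 2, m - Suc 0)) = 1"
proof (cases "2 \<le> m")
  case True then show ?thesis using lvm goodc_neg[OF g] by (simp add: lv_def Uel_entry)
qed (use lvm in \<open>auto simp: lv_def\<close>)

lemma Eop_span: assumes lvm: "lv n m \<xi>" and g: "goodc \<xi>"
  shows "v - Eop \<xi> m v \<in> M.span (rels s act UNIV n m \<xi>)"
proof -
  define gen where "gen = (\<lambda>a. act (Uel n m a) v - s (\<xi> (Uel n m a $$ (m - 2, m - 1))) v)"
  have gen: "gen a \<in> rels s act UNIV n m \<xi>" for a
    unfolding gen_def rels_def using Uel_Umat by blast
  have e: "v - Eop \<xi> m v = s (ci ^ (m - 1)) (\<Sum>a\<in>Pset m. s (- \<xi> (- a (m - 2))) (gen a))"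
  proof -
    have "(\<Sum>a\<in>Pset m. s (- \<xi> (- a (m - 2))) (gen a)) =
          (\<Sum>a\<in>Pset m. v - s (\<xi> (- a (m - 2))) (act (Uel n m a) v))"
      by (rule sum.cong[OF refl]) (simp add: gen_def M.scale_right_diff_distrib chi_entry[OF lvm g])
    also have "\<dots> = s (of_nat (card (Pset m :: (nat \<Rightarrow> 'f) set))) v - (\<Sum>a\<in>Pset m. s (\<xi> (- a (m - 2))) (act (Uel n m a) v))"
      by (simp add: sum_subtractf M.sum_constant_scale)
    finally show ?thesis unfolding Eop_def
      by (simp add: M.scale_right_diff_distrib ci_pow)
  qed
  show ?thesis unfolding e
    by (intro M.span_scale M.span_sum M.span_base gen)
qed

lemma Eop_dual: assumes lvm: "lv n m \<xi>" and gc: "goodc \<xi>" and gd: "g \<in> dual_space s"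
  shows "g - (\<lambda>v. g (Eop \<xi> m v)) \<in>
    Modules.module.span dscale (rels dscale (dual_act n act) (dual_space s) n m (\<lambda>y. \<xi> (- y)))"
proof -
  interpret D: Modules.module "dscale :: 'r \<Rightarrow> ('v \<Rightarrow> 'r) \<Rightarrow> ('v \<Rightarrow> 'r)" by (rule module_dscale)
  interpret G: module_hom s "(*)" g using gd by (simp add: dual_space_def)
  have lvm': "1 \<le> m" "m \<le> n" using lvm by (auto simp: lv_def)
  define gen where "gen = (\<lambda>a. dual_act n act (Uel n m (\<lambda>i. - a i)) g -
      dscale ((\<lambda>y. \<xi> (- y)) (Uel n m (\<lambda>i. - a i) $$ (m - 2, m - 1))) g)"
  have gen: "gen a \<in> rels dscale (dual_act n act) (dual_space s) n m (\<lambda>y. \<xi> (- y))" for a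
    unfolding gen_def rels_def using Uel_Umat gd by blast
  have cc: "\<xi> (- a (m - 2)) * \<xi> (- (Uel n m (\<lambda>i. - a i) $$ (m - 2, m - Suc 0))) = 1" for a :: "nat \<Rightarrow> 'f"
  proof (cases "2 \<le> m")
    case True then show ?thesis using lvm' goodc_neg[OF gc, of "a (m - 2)"] by (simp add: Uel_entry mult.commute)
  qed (use lvm in \<open>auto simp: lv_def\<close>)
  have e: "g - (\<lambda>v. g (Eop \<xi> m v)) = dscale (ci ^ (m - 1)) (\<Sum>a\<in>Pset m. dscale (- \<xi> (- a (m - 2))) (gen a))"
  proof (rule ext)
    fix v
    have "(\<Sum>a\<in>Pset m. dscale (- \<xi> (- a (m - 2))) (gen a)) v =
          (\<Sum>a\<in>Pset m. g v - \<xi> (- a (m - 2)) * g (act (Uel n m a) v))"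
      unfolding sum_fun_apply
    proof (rule sum.cong[OF refl])
      fix a :: "nat \<Rightarrow> 'f"
      have "- \<xi> (- a (m - 2)) * (g (act (Uel n m a) v) - \<xi> (- (Uel n m (\<lambda>i. - a i) $$ (m - 2, m - 1))) * g v)
         = g v - \<xi> (- a (m - 2)) * g (act (Uel n m a) v)"
        using cc[of a] by (simp add: algebra_simps)
      then show "dscale (- \<xi> (- a (m - 2))) (gen a) v = g v - \<xi> (- a (m - 2)) * g (act (Uel n m a) v)"
        unfolding gen_def dual_act_def using lvm' by (simp add: ginv_Uel)
    qed
    also have "\<dots> = of_nat (card (Pset m :: (nat \<Rightarrow> 'f) set)) * g v - (\<Sum>a\<in>Pset m. \<xi> (- a (m - 2)) * g (act (Uel n m a) v))"
      by (simp add: sum_subtractf)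
    finally show "(g - (\<lambda>v. g (Eop \<xi> m v))) v = dscale (ci ^ (m - 1)) (\<Sum>a\<in>Pset m. dscale (- \<xi> (- a (m - 2))) (gen a)) v"
      unfolding Eop_def using ci_pow[of m]
      by (simp add: G.scale G.sum right_diff_distrib sum_distrib_left mult.assoc[symmetric])
  qed
  show ?thesis unfolding e
    by (intro D.span_scale D.span_sum D.span_base gen)
qed

lemma conj_bij: assumes "m' < m" "1 \<le> m'"
  shows "bij_betw (\<lambda>a. restrict (\<lambda>i. a i + (if i < m' - 1 then c i * a (m' - 1) else 0)) {..<m - 1})
     (Pset m) (Pset m :: (nat \<Rightarrow> 'f) set)"
proof -
  define f where "f = (\<lambda>a::nat \<Rightarrow> 'f. restrict (\<lambda>i. a i + (if i < m' - 1 then c i * a (m' - 1) else 0)) {..<m - 1})"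
  define f' where "f' = (\<lambda>a::nat \<Rightarrow> 'f. restrict (\<lambda>i. a i - (if i < m' - 1 then c i * a (m' - 1) else 0)) {..<m - 1})"
  have k: "m' - 1 < m - 1" "\<not> m' - 1 < m' - 1" using assms by auto
  have f1: "f a (m' - 1) = a (m' - 1)" for a using k unfolding f_def by simp
  have f2: "f' a (m' - 1) = a (m' - 1)" for a using k unfolding f'_def by simp
  have ext: "a \<in> Pset m \<Longrightarrow> restrict a {..<m - 1} = a" for a :: "nat \<Rightarrow> 'f"
    unfolding Pset_def by (simp add: PiE_iff extensional_restrict)
  have "bij_betw f (Pset m) (Pset m)"
  proof (rule bij_betw_byWitness[where f'=f'])
    show "\<forall>a\<in>Pset m. f' (f a) = a"
    proof
      fix a :: "nat \<Rightarrow> 'f" assume a: "a \<in> Pset m"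
      have "f' (f a) = restrict a {..<m - 1}" unfolding f'_def f2 f1 unfolding f_def
        by (intro restrict_ext) simp
      then show "f' (f a) = a" using ext[OF a] by simp
    qed
    show "\<forall>a\<in>Pset m. f (f' a) = a"
    proof
      fix a :: "nat \<Rightarrow> 'f" assume a: "a \<in> Pset m"
      have "f (f' a) = restrict a {..<m - 1}" unfolding f_def f1 f2 unfolding f'_def
        by (intro restrict_ext) simp
      then show "f (f' a) = a" using ext[OF a] by simp
    qed
    show "f ` Pset m \<subseteq> Pset m" unfolding f_def Pset_def by (simp add: image_subset_iff)
    show "f' ` Pset m \<subseteq> Pset m" unfolding f'_def Pset_def by (simp add: image_subset_iff)
  qed
  then show ?thesis unfolding f_def .
qed

lemma Eop_conj: assumes lvm: "lv n m \<xi>" and lvm': "lv n m' \<xi>'" and mm: "m' < m"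
  shows "Eop \<xi> m (act (Uel n m' c) v) = act (Uel n m' c) (Eop \<xi> m v)"
proof -
  have l: "1 \<le> m" "m \<le> n" "1 \<le> m'" "m' \<le> n" using lvm lvm' by (auto simp: lv_def)
  interpret H: module_hom s s "act (Uel n m' c)" using l by (intro act_hom Uel_GL) auto
  define T where "T = (\<lambda>a. restrict (\<lambda>i. a i + (if i < m' - 1 then c i * a (m' - 1) else 0)) {..<m - 1})"
  define h where "h = (\<lambda>a. s (\<xi> (- a (m - 2))) (act (Uel n m a) (act (Uel n m' c) v)))"
  have bij: "bij_betw T (Pset m) (Pset m)" unfolding T_def by (rule conj_bij[OF mm l(3)])
  have "(\<Sum>a\<in>Pset m. act (Uel n m' c) (s (\<xi> (- a (m - 2))) (act (Uel n m a) v))) = (\<Sum>a\<in>Pset m. h (T a))"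
  proof (rule sum.cong[OF refl])
    fix a :: "nat \<Rightarrow> 'f" assume "a \<in> Pset m"
    have U: "Uel n m' c * Uel n m a = Uel n m (T a) * Uel n m' c"
      unfolding Uel_conj[OF l(3) mm l(2)] T_def by (rule arg_cong[where f="\<lambda>x. x * _"], rule Uel_cong) auto
    have Ta: "T a (m - 2) = a (m - 2)" using mm l unfolding T_def by auto
    show "act (Uel n m' c) (s (\<xi> (- a (m - 2))) (act (Uel n m a) v)) = h (T a)"
      unfolding h_def H.scale Ta using l by (simp add: act_mult Uel_GL U)
  qed
  then have "act (Uel n m' c) (Eop \<xi> m v) = s (ci ^ (m - 1)) (\<Sum>a\<in>Pset m. h (T a))"
    unfolding Eop_def H.scale H.sum by simp
  also have "(\<Sum>a\<in>Pset m. h (T a)) = (\<Sum>a\<in>Pset m. h a)" by (rule sum.reindex_bij_betw[OF bij])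
  finally show ?thesis unfolding Eop_def h_def by simp
qed

lemma Eop_comm: assumes lvm: "lv n m \<xi>" and lvm': "lv n m' \<xi>'" and mm: "m' < m"
  shows "Eop \<xi> m (Eop \<xi>' m' v) = Eop \<xi>' m' (Eop \<xi> m v)"
proof -
  interpret H: module_hom s s "Eop \<xi> m" by (rule Eop_hom[OF lvm])
  show ?thesis unfolding Eop_def[of \<xi>' m'] H.scale H.sum
    by (simp add: Eop_conj[OF lvm lvm' mm])
qed

lemma Eop_kill: assumes lvm: "lv n m \<xi>" and gc: "goodc \<xi>" and w: "w \<in> rels s act UNIV n m \<xi>"
  shows "Eop \<xi> m w = 0"
proof -
  interpret H: module_hom s s "Eop \<xi> m" by (rule Eop_hom[OF lvm])
  obtain u v where w: "w = act u v - s (\<xi> (u $$ (m - 2, m - 1))) v" and u: "u \<in> Umat n m"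
    using w unfolding rels_def by blast
  define b where "b = (\<lambda>i. u $$ (i, m - 1))"
  have ub: "u = Uel n m b" unfolding b_def by (rule Umat_Uel[OF u])
  have "Eop \<xi> m (act u v) = s (\<xi> (b (m - 2))) (Eop \<xi> m v)"
    unfolding ub by (rule Eop_right[OF lvm gc])
  then show ?thesis unfolding w H.diff H.scale by (simp add: b_def)
qed

lemma Eop_dual_kill: assumes lvm: "lv n m \<xi>" and gc: "goodc \<xi>"
  and w: "w \<in> rels dscale (dual_act n act) (dual_space s) n m (\<lambda>y. \<xi> (- y))"
  shows "w (Eop \<xi> m v') = 0"
proof -
  have l: "1 \<le> m" "m \<le> n" using lvm by (auto simp: lv_def)
  obtain u g where w: "w = dual_act n act u g - dscale (\<xi> (- u $$ (m - 2, m - 1))) g"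
     and u: "u \<in> Umat n m" and g: "g \<in> dual_space s"
    using w unfolding rels_def by blast
  interpret G: module_hom s "(*)" g using g by (simp add: dual_space_def)
  define b where "b = (\<lambda>i. u $$ (i, m - 1))"
  have ub: "u = Uel n m b" unfolding b_def by (rule Umat_Uel[OF u])
  have "act (ginv n u) (Eop \<xi> m v') = s (\<xi> (- b (m - 2))) (Eop \<xi> m v')"
    unfolding ub ginv_Uel[OF l] Eop_left[OF lvm] Eop_right[OF lvm gc] by simp
  then show ?thesis unfolding w dual_act_def by (simp add: G.scale b_def)
qed

end



fun cmp :: "('a \<Rightarrow> 'a) list \<Rightarrow> 'a \<Rightarrow> 'a" where
  "cmp [] v = v"
| "cmp (f # fs) v = f (cmp fs v)"

lemma cmp_comm: "(\<forall>y\<in>set ys. \<forall>w. x (y w) = y (x w)) \<Longrightarrow> x (cmp ys v) = cmp ys (x v)"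
  by (induct ys arbitrary: v) auto

lemma cmp_split:
  assumes "x \<in> set ys" "\<forall>a\<in>set ys. \<forall>b\<in>set ys. \<forall>w. a (b w) = b (a w)"
  shows "cmp ys v = x (cmp (remove1 x ys) v) \<and> cmp ys v = cmp (remove1 x ys) (x v)"
  using assms
proof (induct ys arbitrary: v)
  case (Cons y ys)
  show ?case
  proof (cases "x = y")
    case True
    have "\<forall>z\<in>set ys. \<forall>w. x (z w) = z (x w)" using Cons.prems True by simp
    from cmp_comm[OF this] show ?thesis using True by simp
  next
    case False
    then have x: "x \<in> set ys" using Cons.prems by simp
    have pw: "\<forall>a\<in>set ys. \<forall>b\<in>set ys. \<forall>w. a (b w) = b (a w)" using Cons.prems(2) by simp
    have IH: "cmp ys w = x (cmp (remove1 x ys) w)" "cmp ys w = cmp (remove1 x ys) (x w)" for w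
      using Cons.hyps[OF x pw] by blast+
    have xy: "x (y w) = y (x w)" for w using Cons.prems x by simp
    have IH3: "x (cmp (remove1 x ys) w) = cmp (remove1 x ys) (x w)" for w using IH by metis
    show ?thesis using False by (simp add: IH xy IH3)
  qed
qed simp

lemma cmp_hom:
  assumes "Modules.module s" "\<forall>f\<in>set fs. module_hom s s f"
  shows "module_hom s s (cmp fs)"
  using assms(2)
proof (induct fs)
  case Nil
  have "cmp [] = (\<lambda>v. v)" by (rule ext) simp
  then show ?case using module.module_hom_id[OF assms(1), unfolded id_def] by simp
next
  case (Cons f fs)
  have e: "cmp (f # fs) = f \<circ> cmp fs" by (rule ext) simp
  have "module_hom s s (f \<circ> cmp fs)" using Cons by (intro module_hom_compose) auto
  then show ?case by (simp only: e)
qed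

lemma tele1:
  assumes "Modules.module.subspace s S" "\<forall>f\<in>set fs. \<forall>v. v - f v \<in> S" "Modules.module s"
  shows "v - cmp fs v \<in> S"
  using assms(2)
proof (induct fs arbitrary: v)
  case Nil then show ?case using module.subspace_0[OF assms(3,1)] by simp
next
  case (Cons f fs)
  have "v - cmp (f # fs) v = (v - cmp fs v) + (cmp fs v - f (cmp fs v))"
    by simp
  also have "\<dots> \<in> S" using Cons by (intro module.subspace_add[OF assms(3,1)]) auto
  finally show ?case .
qed

lemma tele2:
  assumes "Modules.module.subspace sc S" "Modules.module sc"
    "\<forall>f\<in>set fs. \<forall>g\<in>D. (\<lambda>v. g (f v)) \<in> D \<and> g - (\<lambda>v. g (f v)) \<in> S"
    "g \<in> D"
  shows "g - (\<lambda>v. g (cmp fs v)) \<in> S"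
  using assms(3,4)
proof (induct fs arbitrary: g)
  case Nil
  have "g - (\<lambda>v. g (cmp [] v)) = 0" by (simp add: fun_eq_iff)
  then show ?case using module.subspace_0[OF assms(2,1)] by metis
next
  case (Cons f fs)
  have hf: "\<forall>g\<in>D. (\<lambda>v. g (f v)) \<in> D \<and> g - (\<lambda>v. g (f v)) \<in> S" using Cons.prems(1) by (meson list.set_intros(1))
  have gf: "(\<lambda>v. g (f v)) \<in> D" "g - (\<lambda>v. g (f v)) \<in> S" using hf Cons.prems(2) by blast+
  have hfs: "\<forall>f\<in>set fs. \<forall>g\<in>D. (\<lambda>v. g (f v)) \<in> D \<and> g - (\<lambda>v. g (f v)) \<in> S" using Cons.prems(1) by (meson list.set_intros(2))
  have "g - (\<lambda>v. g (cmp (f # fs) v)) = (g - (\<lambda>v. g (f v))) + ((\<lambda>v. g (f v)) - (\<lambda>v. (\<lambda>v. g (f v)) (cmp fs v)))"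
    by (simp add: fun_eq_iff)
  also have "\<dots> \<in> S" using Cons.hyps[OF hfs gf(1)] gf
    by (intro module.subspace_add[OF assms(2,1)]) (simp_all only:)
  finally show ?case .
qed

lemma span_span_Un: assumes "Modules.module sc"
  shows "Modules.module.span sc (Modules.module.span sc X \<union> Y) = Modules.module.span sc (X \<union> Y)"
proof -
  interpret M: Modules.module sc by fact
  have a: "M.span X \<subseteq> M.span (X \<union> Y)" by (rule M.span_mono) auto
  have b: "Y \<subseteq> M.span (X \<union> Y)" using M.span_superset by blast
  have c: "X \<subseteq> M.span (M.span X \<union> Y)" using M.span_superset by blast
  have d: "Y \<subseteq> M.span (M.span X \<union> Y)" using M.span_superset by blast
  show ?thesis unfolding M.span_eq using a b c d by blast
qed

lemma phiW_span: assumes "Modules.module sc"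
  shows "phiW sc A V n \<chi> j = Modules.module.span sc (\<Union>i<j. rels sc A V n (n - i) \<chi>)"
proof (induct j)
  case 0 then show ?case by simp
next
  case (Suc j)
  have "(\<Union>i<Suc j. rels sc A V n (n - i) \<chi>) = (\<Union>i<j. rels sc A V n (n - i) \<chi>) \<union> rels sc A V n (n - j) \<chi>"
    by (auto simp: lessThan_Suc)
  then show ?case using Suc by (simp add: span_span_Un[OF assms])
qed

lemma relsT_rels: assumes "Modules.module sc"
  shows "relsT A V n m = rels sc A V n m (\<lambda>_. 1)"
  unfolding relsT_def rels_def using module.scale_one[OF assms] by simp

lemma derivW_span: assumes "Modules.module sc"
  shows "derivW sc A V n k \<chi> = Modules.module.span sc ((\<Union>i<k - 1. rels sc A V n (n - i) \<chi>) \<union> rels sc A V n (n - k + 1) (\<lambda>_. 1))"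
  unfolding derivW_def phiW_span[OF assms] relsT_rels[OF assms] span_span_Un[OF assms] ..


theorem corollary2p6:
  fixes p :: nat
    and \<psi> :: "'f::{field,finite} \<Rightarrow> complex"
    and \<phi> :: "complex \<Rightarrow> 'r::comm_ring_1"
    and s :: "'r \<Rightarrow> 'v::ab_group_add \<Rightarrow> 'v"
    and act :: "'f mat \<Rightarrow> 'v \<Rightarrow> 'v"
    and n k :: nat
  assumes "prime p" and "CHAR('f) = p"
    and "noetherian_ring TYPE('r)"
    and "Zpz_alg_hom p \<phi>"
    and "nontriv_add_char p \<psi>"
    and "is_rep n s act"
    and "1 \<le> k" and "k \<le> n"
  shows "quot_iso
     dscale (deriv_dual_act n k act) (deriv_dual_space s act n k (\<lambda>y. \<phi> (\<psi> y))) {0}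
     dscale (\<lambda>g. dual_act n act (emb n g)) (dual_space s)
       (derivW dscale (dual_act n act) (dual_space s) n k (\<lambda>y. \<phi> (\<psi> (- y))))
     (GL (n - k))"
proof -
  note pp = assms(1) and chp = assms(2) and hom = assms(4) and psi = assms(5) and rep = assms(6)
    and k1 = assms(7) and kn = assms(8)
  have mods: "Modules.module s" using rep by (simp add: is_rep_def)
  interpret M: Modules.module s by (rule mods)
  have modD: "Modules.module (dscale :: 'r \<Rightarrow> ('v \<Rightarrow> 'r) \<Rightarrow> ('v \<Rightarrow> 'r))" by (rule module_dscale)
  interpret D: Modules.module "dscale :: 'r \<Rightarrow> ('v \<Rightarrow> 'r) \<Rightarrow> ('v \<Rightarrow> 'r)" by (rule modD)
  have phi1: "\<phi> 1 = 1" and phiadd: "\<And>x y. x \<in> Zpz p \<Longrightarrow> y \<in> Zpz p \<Longrightarrow> \<phi> (x + y) = \<phi> x + \<phi> y"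
    and phimult: "\<And>x y. x \<in> Zpz p \<Longrightarrow> y \<in> Zpz p \<Longrightarrow> \<phi> (x * y) = \<phi> x * \<phi> y"
    using hom by (auto simp: Zpz_alg_hom_def)
  have Z0: "0 \<in> Zpz p"
  proof -
    have "1 + - 1 \<in> Zpz p" by (intro Zpz.add Zpz.neg Zpz.one)
    then show ?thesis by simp
  qed
  have phi0: "\<phi> 0 = 0" using phiadd[OF Z0 Z0] by simp
  have natZ: "of_nat j \<in> Zpz p \<and> \<phi> (of_nat j) = of_nat j" for j
  proof (induct j)
    case 0 then show ?case using Z0 phi0 by simp
  next
    case (Suc j)
    have "of_nat (Suc j) = 1 + (of_nat j :: complex)" by simp
    then show ?case using Suc phiadd[OF Zpz.one, of "of_nat j"] phi1 Zpz.add[OF Zpz.one, of "of_nat j"] by simp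
  qed
  have p0: "p \<noteq> 0" using pp by auto
  have pinv: "\<phi> (1 / of_nat p) * of_nat p = 1"
  proof -
    have "\<phi> (1 / of_nat p * of_nat p) = \<phi> (1 / of_nat p) * \<phi> (of_nat p)"
      using natZ[of p] by (intro phimult Zpz.invp) auto
    moreover have "(1 / of_nat p * of_nat p :: complex) = 1" using p0 by simp
    ultimately show ?thesis using natZ[of p] phi1 by simp
  qed
  have pc: "prime CHAR('f)" using pp chp by simp
  obtain d where d: "card (UNIV :: 'f set) = CHAR('f) ^ d"
    using card_field_power[OF pc] by auto
  define ci where "ci = \<phi> (1 / of_nat p) ^ d"
  have ci: "ci * of_nat (card (UNIV :: 'f set)) = 1"
    unfolding ci_def d chp by (simp add: power_mult_distrib[symmetric] pinv)
  interpret C: dctx s act n ci by unfold_locales (use rep ci in auto)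
  define \<chi> where "\<chi> = (\<lambda>y. \<phi> (\<psi> y))"
  have psiZ: "\<And>x. \<psi> x \<in> Zpz p" and psiadd: "\<And>x y. \<psi> (x + y) = \<psi> x * \<psi> y"
    and psiinv: "\<And>x. \<exists>y\<in>Zpz p. \<psi> x * y = 1"
    using psi by (auto simp: nontriv_add_char_def)
  have psi0: "\<psi> 0 = 1"
  proof -
    have "\<psi> 0 = \<psi> 0 * \<psi> 0" using psiadd[of 0 0] by simp
    moreover have "\<psi> 0 \<noteq> 0" using psiinv[of 0] by auto
    ultimately show ?thesis by simp
  qed
  have gchi: "goodc \<chi>" unfolding goodc_def \<chi>_def using psi0 phi1 psiadd phimult psiZ by auto
  have g1: "goodc (\<lambda>_::'f. 1::'r)" unfolding goodc_def by simp
  define Ls :: "(nat \<times> ('f \<Rightarrow> 'r)) list" where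
    "Ls = map (\<lambda>i. (n - i, \<chi>)) [0..<k - 1] @ [(n - k + 1, \<lambda>_. 1)]"
  have setLs: "set Ls = (\<lambda>i. (n - i, \<chi>)) ` {..<k - 1} \<union> {(n - k + 1, \<lambda>_. 1)}"
    unfolding Ls_def by auto
  have Ls_ok: "lv n m \<xi> \<and> goodc \<xi>" if "(m, \<xi>) \<in> set Ls" for m \<xi>
    using that k1 kn gchi g1 unfolding setLs lv_def by auto
  have Ls_uniq: "\<xi> = \<xi>'" if "(m, \<xi>) \<in> set Ls" "(m, \<xi>') \<in> set Ls" for m \<xi> \<xi>'
    using that k1 kn unfolding setLs by auto
  define ops where "ops = map (\<lambda>(m, \<xi>). C.Eop \<xi> m) Ls"
  have ops_iff: "f \<in> set ops \<longleftrightarrow> (\<exists>m \<xi>. (m, \<xi>) \<in> set Ls \<and> f = C.Eop \<xi> m)" for f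
    unfolding ops_def by auto
  define E where "E = cmp ops"
  have pw: "\<forall>a\<in>set ops. \<forall>b\<in>set ops. \<forall>w. a (b w) = b (a w)"
  proof (intro ballI allI)
    fix a b w assume a: "a \<in> set ops" and b: "b \<in> set ops"
    obtain m \<xi> where m: "(m, \<xi>) \<in> set Ls" "a = C.Eop \<xi> m" using a ops_iff by blast
    obtain m' \<xi>' where m': "(m', \<xi>') \<in> set Ls" "b = C.Eop \<xi>' m'" using b ops_iff by blast
    show "a (b w) = b (a w)"
    proof (cases m m' rule: linorder_cases)
      case less
      have "lv n m \<xi>" "lv n m' \<xi>'" using m(1) m'(1) Ls_ok by blast+
      then show ?thesis using C.Eop_comm[of m' \<xi>' m \<xi> w] less m m' by simp
    next
      case equal
      then have "\<xi> = \<xi>'" using m(1) m'(1) Ls_uniq by blast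
      then show ?thesis using m m' equal by simp
    next
      case greater
      have "lv n m \<xi>" "lv n m' \<xi>'" using m(1) m'(1) Ls_ok by blast+
      then show ?thesis using C.Eop_comm[of m \<xi> m' \<xi>' w] greater m m' by simp
    qed
  qed
  have ops_hom: "\<forall>f\<in>set ops. module_hom s s f"
  proof
    fix f assume "f \<in> set ops"
    then obtain m \<xi> where m: "(m, \<xi>) \<in> set Ls" "f = C.Eop \<xi> m" using ops_iff by blast
    show "module_hom s s f" unfolding m(2) using Ls_ok[OF m(1)] C.Eop_hom by blast
  qed
  have E_hom: "module_hom s s E" unfolding E_def by (rule cmp_hom[OF mods ops_hom])
  have rem_hom: "module_hom s s (cmp (remove1 f ops))" for f
    using ops_hom set_remove1_subset[of f ops] by (intro cmp_hom[OF mods]) (meson subsetD)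
  define G where "G = (\<Union>(m, \<xi>)\<in>set Ls. rels s act UNIV n m \<xi>)"
  define GD where "GD = (\<Union>(m, \<xi>)\<in>set Ls. rels dscale (dual_act n act) (dual_space s) n m (\<lambda>y. \<xi> (- y)))"
  have W: "derivW s act UNIV n k (\<lambda>y. \<phi> (\<psi> y)) = M.span G"
    unfolding derivW_span[OF mods] G_def setLs \<chi>_def by (rule arg_cong[where f=M.span]) auto
  have W2: "derivW dscale (dual_act n act) (dual_space s) n k (\<lambda>y. \<phi> (\<psi> (- y))) = D.span GD"
    unfolding derivW_span[OF modD] GD_def setLs \<chi>_def by (rule arg_cong[where f=D.span]) auto
  have K1: "v - E v \<in> M.span G" for v
    unfolding E_def
  proof (rule tele1[OF M.subspace_span _ mods], intro ballI allI)
    fix f v assume "f \<in> set ops"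
    then obtain m \<xi> where m: "(m, \<xi>) \<in> set Ls" "f = C.Eop \<xi> m" using ops_iff by blast
    have "v - f v \<in> M.span (rels s act UNIV n m \<xi>)" using m Ls_ok C.Eop_span by blast
    moreover have "M.span (rels s act UNIV n m \<xi>) \<subseteq> M.span G"
      using m(1) unfolding G_def by (intro M.span_mono) blast
    ultimately show "v - f v \<in> M.span G" by blast
  qed
  have K2: "E w = 0" if w: "w \<in> G" for w
  proof -
    obtain m \<xi> where m: "(m, \<xi>) \<in> set Ls" "w \<in> rels s act UNIV n m \<xi>" using w unfolding G_def by blast
    define x where "x = C.Eop \<xi> m"
    have x: "x \<in> set ops" using m(1) ops_iff x_def by blast
    have "E w = cmp (remove1 x ops) (x w)" unfolding E_def using cmp_split[OF x pw] by blast
    also have "x w = 0" unfolding x_def using m Ls_ok C.Eop_kill by blast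
    finally show ?thesis using module_hom.zero[OF rem_hom] by simp
  qed
  have K3: "w (E v) = 0" if w: "w \<in> GD" for w v
  proof -
    obtain m \<xi> where m: "(m, \<xi>) \<in> set Ls" "w \<in> rels dscale (dual_act n act) (dual_space s) n m (\<lambda>y. \<xi> (- y))"
      using w unfolding GD_def by blast
    define x where "x = C.Eop \<xi> m"
    have x: "x \<in> set ops" using m(1) ops_iff x_def by blast
    have "E v = x (cmp (remove1 x ops) v)" unfolding E_def using cmp_split[OF x pw] by blast
    then show ?thesis unfolding x_def using m Ls_ok C.Eop_dual_kill by metis
  qed
  have K4: "g - (\<lambda>v. g (E v)) \<in> D.span GD" if g: "g \<in> dual_space s" for g
    unfolding E_def
  proof (rule tele2[OF D.subspace_span modD _ g], intro ballI conjI)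
    fix f g assume f: "f \<in> set ops" and g: "g \<in> dual_space s"
    then obtain m \<xi> where m: "(m, \<xi>) \<in> set Ls" "f = C.Eop \<xi> m" using ops_iff by blast
    have "module_hom s (*) (g \<circ> f)" using g f ops_hom
      by (intro module_hom_compose) (auto simp: dual_space_def)
    then show "(\<lambda>v. g (f v)) \<in> dual_space s" by (simp add: dual_space_def comp_def)
    have "g - (\<lambda>v. g (f v)) \<in> D.span (rels dscale (dual_act n act) (dual_space s) n m (\<lambda>y. \<xi> (- y)))"
      using m Ls_ok C.Eop_dual g by blast
    moreover have "D.span (rels dscale (dual_act n act) (dual_space s) n m (\<lambda>y. \<xi> (- y))) \<subseteq> D.span GD"
      using m(1) unfolding GD_def by (intro D.span_mono) blast
    ultimately show "g - (\<lambda>v. g (f v)) \<in> D.span GD" by blast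
  qed
  have V1: "x \<in> deriv_dual_space s act n k (\<lambda>y. \<phi> (\<psi> y)) \<longleftrightarrow>
        x \<in> dual_space s \<and> (\<forall>w\<in>M.span G. x w = 0)" for x
    unfolding deriv_dual_space_def W by simp
  define V1 where "V1 = deriv_dual_space s act n k (\<lambda>y. \<phi> (\<psi> y))"
  have c1: "\<forall>x\<in>V1. x \<in> dual_space s" using V1 unfolding V1_def by blast
  have c2: "\<forall>x\<in>V1. \<forall>y\<in>V1. x + y - (x + y) \<in> D.span GD" using D.span_zero by simp
  have c3: "\<forall>c. \<forall>x\<in>V1. dscale c x - dscale c x \<in> D.span GD" using D.span_zero by simp
  have c4: "\<forall>x\<in>V1. x \<in> {0} \<longleftrightarrow> x \<in> D.span GD"
  proof
    fix x assume x: "x \<in> V1"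
    then have xd: "x \<in> dual_space s" and xW: "\<And>w. w \<in> M.span G \<Longrightarrow> x w = 0" using V1 unfolding V1_def by auto
    interpret X: module_hom s "(*)" x using xd by (simp add: dual_space_def)
    show "x \<in> {0} \<longleftrightarrow> x \<in> D.span GD"
    proof
      assume "x \<in> {0}" then show "x \<in> D.span GD" using D.span_zero by simp
    next
      assume xs: "x \<in> D.span GD"
      have sub: "D.subspace {w. \<forall>v. w (E v) = 0}"
        unfolding D.subspace_def by (auto simp: dscale_def)
      have "D.span GD \<subseteq> {w. \<forall>v. w (E v) = 0}"
        by (rule D.span_minimal[OF _ sub]) (use K3 in blast)
      then have xE: "x (E v) = 0" for v using xs by blast
      have "x v = 0" for v
      proof -
        have "x v = x (E v + (v - E v))" by simp
        also have "\<dots> = x (E v) + x (v - E v)" by (rule X.add)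
        finally show ?thesis using xE xW[OF K1] by simp
      qed
      then show "x \<in> {0}" by (simp add: fun_eq_iff)
    qed
  qed
  have c5: "\<forall>y\<in>dual_space s. \<exists>x\<in>V1. y - x \<in> D.span GD"
  proof
    fix y assume y: "y \<in> dual_space s"
    have yE: "module_hom s (*) (y \<circ> E)" using E_hom y
      by (intro module_hom_compose) (auto simp: dual_space_def)
    have "(\<lambda>v. y (E v)) \<in> V1"
      unfolding V1_def V1
    proof
      show "(\<lambda>v. y (E v)) \<in> dual_space s" using yE by (simp add: dual_space_def comp_def)
      have y0: "y 0 = 0" using y module_hom.zero[of s "(*)" y] by (simp add: dual_space_def)
      show "\<forall>w\<in>M.span G. y (E w) = 0"
      proof
        fix w assume "w \<in> M.span G"
        then show "y (E w) = 0" using module_hom.eq_0_on_span[OF yE, of G w] K2 y0 by simp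
      qed
    qed
    then show "\<exists>x\<in>V1. y - x \<in> D.span GD"
      using K4[OF y] by blast
  qed
  have c6: "\<forall>g\<in>(GL (n - k) :: 'f mat set). \<forall>x\<in>V1. deriv_dual_act n k act g x - dual_act n act (emb n g) x \<in> D.span GD"
  proof (intro ballI)
    fix g :: "'f mat" and x :: "'v \<Rightarrow> 'r" assume g: "g \<in> GL (n - k)"
    have "deriv_dual_act n k act g x = dual_act n act (emb n g) x"
      unfolding deriv_dual_act_def dual_act_def using ginv_emb[OF g] by simp
    then show "deriv_dual_act n k act g x - dual_act n act (emb n g) x \<in> D.span GD"
      using D.span_zero by simp
  qed
  show ?thesis
    unfolding quot_iso_def W2 V1_def[symmetric]
    by (rule exI[of _ "\<lambda>x. x"]) (intro conjI c1 c2 c3 c4 c5 c6)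
qed


end
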